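(* Let $G=(L\cup R,E)$ be a Tanner graph with girth $g>4$, and let $\mathcal{S}\subset L$ be an $(a,b)$ trapping set. If $\mathcal{S}$ contains a variable node $v$ with $d(v)>b$, then $a\ge d(v)+1-b$.
   Context: A Tanner graph is a bipartite graph $G=(L\cup R,E)$ with variable nodes $L$ and check nodes $R$, without parallel edges; $d(v)$ is the degree of $v$ in $G$, and the girth is the length of a shortest cycle. For $\mathcal{S}\subset L$, $\Gamma(\mathcal{S})$ is the set of neighbors of $\mathcal{S}$ in $R$; the induced subgraph $G(\mathcal{S})$ has node set $\mathcal{S}\cup\Gamma(\mathcal{S})$ and the edges of $G$ between them; $\Gamma_{\mathrm{o}}(\mathcal{S})$ is the set of check nodes in $\Gamma(\mathcal{S})$ of odd degree in $G(\mathcal{S})$. $\mathcal{S}$ is an $(a,b)$ trapping set if $|\mathcal{S}|=a$ and $|\Gamma_{\mathrm{o}}(\mathcal{S})|=b$. *)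

theory Defs
  imports Main
begin

definition tanner_graph :: "'a set \<Rightarrow> 'a set \<Rightarrow> ('a \<times> 'a) set \<Rightarrow> bool" where
  "tanner_graph L R E \<longleftrightarrow> finite L \<and> finite R \<and> L \<inter> R = {} \<and> E \<subseteq> L \<times> R"

definition adj :: "('a \<times> 'a) set \<Rightarrow> 'a \<Rightarrow> 'a \<Rightarrow> bool" where
  "adj E x y \<longleftrightarrow> (x, y) \<in> E \<or> (y, x) \<in> E"

definition is_cycle :: "('a \<times> 'a) set \<Rightarrow> 'a list \<Rightarrow> bool" where
  "is_cycle E vs \<longleftrightarrow> length vs \<ge> 3 \<and> distinct vs \<and>
     (\<forall>i < length vs. adj E (vs ! i) (vs ! ((i + 1) mod length vs)))"

text \<open>girth > k: every cycle has length > k (vacuous for acyclic graphs, girth = \<infinity>).\<close>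
definition girth_gt :: "('a \<times> 'a) set \<Rightarrow> nat \<Rightarrow> bool" where
  "girth_gt E k \<longleftrightarrow> (\<forall>vs. is_cycle E vs \<longrightarrow> length vs > k)"

definition deg :: "('a \<times> 'a) set \<Rightarrow> 'a \<Rightarrow> nat" where
  "deg E v = card {u. adj E v u}"

definition nbrs :: "('a \<times> 'a) set \<Rightarrow> 'a set \<Rightarrow> 'a set" where
  "nbrs E S = {c. \<exists>v\<in>S. (v, c) \<in> E}"

definition deg_in :: "('a \<times> 'a) set \<Rightarrow> 'a set \<Rightarrow> 'a \<Rightarrow> nat" where
  "deg_in E S c = card {v\<in>S. (v, c) \<in> E}"

definition odd_nbrs :: "('a \<times> 'a) set \<Rightarrow> 'a set \<Rightarrow> 'a set" where
  "odd_nbrs E S = {c \<in> nbrs E S. odd (deg_in E S c)}"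

definition trapping_set :: "'a set \<Rightarrow> ('a \<times> 'a) set \<Rightarrow> 'a set \<Rightarrow> nat \<Rightarrow> nat \<Rightarrow> bool" where
  "trapping_set L E S a b \<longleftrightarrow> S \<subseteq> L \<and> card S = a \<and> card (odd_nbrs E S) = b"

end

theory Submission
  imports Defs
begin

theorem lemma5:
  fixes L R :: "'a set" and E :: "('a \<times> 'a) set" and S :: "'a set" and a b :: nat and v :: 'a
  assumes "tanner_graph L R E"
    and "girth_gt E 4"
    and "trapping_set L E S a b"
    and "v \<in> S"
    and "deg E v > b"
  shows "a \<ge> deg E v + 1 - b"
proof -
  have fL: "finite L" and fR: "finite R" and dj: "L \<inter> R = {}" and ELR: "E \<subseteq> L \<times> R"
    using assms(1) unfolding tanner_graph_def by auto
  have SL: "S \<subseteq> L" and ca: "card S = a" and cb: "card (odd_nbrs E S) = b"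
    using assms(3) unfolding trapping_set_def by auto
  have vL: "v \<in> L" using SL assms(4) by auto
  have fS: "finite S" using SL fL finite_subset by blast
  define N where "N = {c. (v,c) \<in> E}"
  have NR: "N \<subseteq> R" using ELR unfolding N_def by auto
  have fN: "finite N" using NR fR finite_subset by blast
  have "{u. adj E v u} = N"
    unfolding N_def adj_def using ELR dj vL by auto
  hence dN: "deg E v = card N" unfolding deg_def by simp
  define Ev where "Ev = N - odd_nbrs E S"
  have fodd: "finite (odd_nbrs E S)"
    unfolding odd_nbrs_def nbrs_def
  proof (rule finite_subset[OF _ fR])
    show "{c \<in> {c. \<exists>v\<in>S. (v, c) \<in> E}. odd (deg_in E S c)} \<subseteq> R" using ELR by auto
  qed
  have cEv: "card Ev \<ge> card N - b"
    unfolding Ev_def using diff_card_le_card_Diff[OF fodd, of N] cb by simp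
  have ex: "\<exists>u. u \<in> S \<and> u \<noteq> v \<and> (u,c) \<in> E" if c: "c \<in> Ev" for c
  proof -
    have cN: "(v,c) \<in> E" using c unfolding Ev_def N_def by auto
    have "c \<in> nbrs E S" unfolding nbrs_def using cN assms(4) by auto
    hence ev: "even (deg_in E S c)" using c unfolding Ev_def odd_nbrs_def by auto
    define T where "T = {w\<in>S. (w, c) \<in> E}"
    have fT: "finite T" unfolding T_def using fS by auto
    have vT: "v \<in> T" unfolding T_def using cN assms(4) by auto
    have "card T \<ge> 1" using fT vT card_0_eq by fastforce
    moreover have "card T \<noteq> 1" using ev unfolding deg_in_def T_def by auto
    ultimately have "card T \<ge> 2" by linarith
    hence "card (T - {v}) \<ge> 1" using card_Diff_singleton[OF vT] by simp
    hence "T - {v} \<noteq> {}" by (metis card.empty not_one_le_zero)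
    thus ?thesis unfolding T_def by auto
  qed
  define f where "f c = (SOME u. u \<in> S \<and> u \<noteq> v \<and> (u,c) \<in> E)" for c
  have fp: "f c \<in> S \<and> f c \<noteq> v \<and> (f c, c) \<in> E" if "c \<in> Ev" for c
    unfolding f_def using someI_ex[OF ex[OF that]] .
  have inj: "inj_on f Ev"
  proof (rule inj_onI)
    fix c c' assume c: "c \<in> Ev" and c': "c' \<in> Ev" and eq: "f c = f c'"
    show "c = c'"
    proof (rule ccontr)
      assume ne: "c \<noteq> c'"
      let ?u = "f c"
      have u: "?u \<in> S" "?u \<noteq> v" "(?u, c) \<in> E" "(?u, c') \<in> E"
        using fp[OF c] fp[OF c'] eq by auto
      have vc: "(v,c) \<in> E" "(v,c') \<in> E" using c c' unfolding Ev_def N_def by auto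
      have uL: "?u \<in> L" using u SL by auto
      have cR: "c \<in> R" "c' \<in> R" using vc ELR by auto
      have d: "v \<noteq> c" "v \<noteq> c'" "?u \<noteq> c" "?u \<noteq> c'"
        using uL cR vL dj by auto
      have dist: "distinct [v, c, ?u, c']" using d u(2) ne by auto
      have ad: "\<forall>i<4. adj E ([v, c, ?u, c'] ! i) ([v, c, ?u, c'] ! ((i + 1) mod 4))"
      proof (intro allI impI)
        fix i :: nat assume "i < 4"
        hence "i = 0 \<or> i = 1 \<or> i = 2 \<or> i = 3" by arith
        thus "adj E ([v, c, ?u, c'] ! i) ([v, c, ?u, c'] ! ((i + 1) mod 4))"
          using u vc by (auto simp: adj_def)
      qed
      have "is_cycle E [v, c, ?u, c']"
        unfolding is_cycle_def using dist ad by simp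
      thus False using assms(2) unfolding girth_gt_def by fastforce
    qed
  qed
  have "f ` Ev \<subseteq> S - {v}" using fp by auto
  hence "card Ev \<le> card (S - {v})"
    using card_inj_on_le[OF inj] fS by blast
  also have "\<dots> = a - 1" using ca fS assms(4) by simp
  finally have "card Ev \<le> a - 1" .
  moreover have "a \<ge> 1" using ca fS assms(4) card_0_eq by fastforce
  ultimately show ?thesis using cEv dN by linarith
qed

end
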